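(* Let $S\in\mathbb{R}^{n\times n_s}$ and $T\in\mathbb{R}^{n\times n_t}$, and let $\mathcal{C}_{\mathrm{LP}}=\{M\in\mathbb{R}_{\ge0}^{n_s\times n_t} : SM=T\}$, with $d$ its (affine) dimension. Let $\mathcal{F}_{\mathrm{LP}}=\{x\in\mathbb{R}^{1\times n_s} : |\{xM : M\in\mathcal{C}_{\mathrm{LP}}\}|=1\}$. Let $X$ be a finite set of test inputs (row vectors in $\mathbb{R}^{1\times n_s}$). Let $M_1$ be any mapping in $\mathcal{C}_{\mathrm{LP}}$, and let $\mathrm{vec}(M_2)$ be sampled from a proper density (absolutely continuous w.r.t. $d$-dimensional Lebesgue measure) over a $d$-dimensional ball lying in $\mathcal{C}_{\mathrm{LP}}$ centered at $\mathrm{vec}(M_1)$. Then, with probability 1, for all $x\in X$, $xM_1=xM_2$ implies $x\in\mathcal{F}_{\mathrm{LP}}$.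
   Context: $\mathrm{vec}(M)$ denotes the vectorization of the matrix $M$. Rows of $S$ are count vectors of training inputs (bags of source atoms over $n_s$ types) and rows of $T$ the corresponding output count vectors (over $n_t$ target atom types); a (relaxed) mapping is a real nonnegative matrix $M$ with output $xM$ on input $x$. A $d$-dimensional ball lying in $\mathcal{C}_{\mathrm{LP}}$ means a ball of dimension $d$ within the affine hull of $\mathcal{C}_{\mathrm{LP}}$ and contained in $\mathcal{C}_{\mathrm{LP}}$. *)

theory Defs
  imports "HOL-Analysis.Analysis" "HOL-Probability.Probability"
begin

definition orthonormal_list :: "'a::real_inner list \<Rightarrow> bool" where
  "orthonormal_list bs \<longleftrightarrow>
     (\<forall>i<length bs. \<forall>j<length bs. inner (bs ! i) (bs ! j) = (if i = j then 1 else 0))"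

text \<open>The d-dimensional Lebesgue measure on the affine hull of a set A (d = aff_dim A):
  the push-forward of Lebesgue measure on R^d (realised as the product of length bs
  copies of lborel) under an isometric affine parametrisation  z \<mapsto> a + \<Sum> z_i b_i,
  where a \<in> A and bs is an orthonormal basis of the direction space span (A - a).\<close>
definition lebesgue_on_affine :: "'a::euclidean_space set \<Rightarrow> 'a measure" where
  "lebesgue_on_affine A =
     (let a = (SOME a. a \<in> A);
          bs = (SOME bs. orthonormal_list bs \<and> span (set bs) = span ((\<lambda>x. x - a) ` A))
      in distr (PiM {..<length bs} (\<lambda>_. lborel)) borel
               (\<lambda>z. a + (\<Sum>i<length bs. z i *\<^sub>R bs ! i)))"

text \<open>Feasible relaxed mappings: nonnegative M (rows indexed by source types 's,
  columns by target types 't) with S M = T.\<close>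
definition C_LP :: "real^'s^'n \<Rightarrow> real^'t^'n \<Rightarrow> (real^'t^'s) set" where
  "C_LP S T = {M. (\<forall>i j. 0 \<le> M $ i $ j) \<and> S ** M = T}"

definition F_LP :: "real^'s^'n \<Rightarrow> real^'t^'n \<Rightarrow> (real^'s) set" where
  "F_LP S T = {x. card {x v* M | M. M \<in> C_LP S T} = 1}"

end

theory Submission
  imports Defs
begin

lemma vm_linear: "linear (\<lambda>M::real^'t^'s. x v* M)"
  by (rule linearI) (auto simp: vector_matrix_mult_def vec_eq_iff sum.distrib sum_distrib_left algebra_simps)

lemma null_hyper:
  fixes \<beta> :: "nat \<Rightarrow> real"
  assumes "j < k" "\<beta> j \<noteq> 0"
  shows "{z \<in> space (PiM {..<k} (\<lambda>_. lborel::real measure)). (\<Sum>i<k. z i * \<beta> i) = \<gamma>} \<in> null_sets (PiM {..<k} (\<lambda>_. lborel::real measure))"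
proof -
  interpret product_sigma_finite "\<lambda>_::nat. lborel :: real measure"
    by (simp add: product_sigma_finite_def lborel.sigma_finite_measure_axioms)
  let ?I = "{..<k} - {j}"
  let ?A = "{z \<in> space (PiM {..<k} (\<lambda>_. lborel::real measure)). (\<Sum>i<k. z i * \<beta> i) = \<gamma>}"
  have IJ: "?I \<union> {j} = {..<k}" using assms by auto
  have Ameas: "?A \<in> sets (PiM {..<k} (\<lambda>_. lborel::real measure))" by measurable
  have "emeasure (PiM (?I \<union> {j}) (\<lambda>_. lborel::real measure)) ?A = (\<integral>\<^sup>+x. emeasure (PiM {j} (\<lambda>_. lborel::real measure)) ((\<lambda>y. merge ?I {j} (x, y)) -` ?A \<inter> space (PiM {j} (\<lambda>_. lborel::real measure))) \<partial>PiM ?I (\<lambda>_. lborel::real measure))"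
    by (rule emeasure_fold_integral) (use Ameas IJ in auto)
  also have "\<dots> = (\<integral>\<^sup>+x. 0 \<partial>PiM ?I (\<lambda>_. lborel::real measure))"
  proof (intro nn_integral_cong)
    fix x assume x: "x \<in> space (PiM ?I (\<lambda>_. lborel::real measure))"
    define c where "c = (\<gamma> - (\<Sum>i\<in>?I. x i * \<beta> i)) / \<beta> j"
    have sub: "(\<lambda>y. merge ?I {j} (x, y)) -` ?A \<inter> space (PiM {j} (\<lambda>_. lborel::real measure)) \<subseteq> PiE {j} (\<lambda>_. {c})"
    proof
      fix y assume y: "y \<in> (\<lambda>y. merge ?I {j} (x, y)) -` ?A \<inter> space (PiM {j} (\<lambda>_. lborel::real measure))"
      then have ext: "y \<in> extensional {j}" by (simp add: space_PiM PiE_def)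
      have "(\<Sum>i<k. merge ?I {j} (x, y) i * \<beta> i) = \<gamma>" using y by simp
      moreover have "(\<Sum>i<k. merge ?I {j} (x, y) i * \<beta> i) = merge ?I {j} (x, y) j * \<beta> j + (\<Sum>i\<in>?I. merge ?I {j} (x, y) i * \<beta> i)"
        using assms by (subst sum.remove[of _ j]) auto
      moreover have "(\<Sum>i\<in>?I. merge ?I {j} (x, y) i * \<beta> i) = (\<Sum>i\<in>?I. x i * \<beta> i)"
        by (rule sum.cong) auto
      ultimately have "y j * \<beta> j + (\<Sum>i\<in>?I. x i * \<beta> i) = \<gamma>" by simp
      then have "y j = c" using assms(2) unfolding c_def by (simp add: field_simps)
      then show "y \<in> PiE {j} (\<lambda>_. {c})" using ext by (auto simp: PiE_def extensional_def)
    qed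
    have PiEs: "PiE {j} (\<lambda>_. {c}) \<in> sets (PiM {j} (\<lambda>_. lborel::real measure))"
      by (rule sets_PiM_I_finite) auto
    have z: "emeasure (PiM {j} (\<lambda>_. lborel::real measure)) (PiE {j} (\<lambda>_. {c})) = 0"
      by (subst emeasure_PiM) auto
    have "emeasure (PiM {j} (\<lambda>_. lborel::real measure)) ((\<lambda>y. merge ?I {j} (x, y)) -` ?A \<inter> space (PiM {j} (\<lambda>_. lborel::real measure))) \<le> 0"
      using emeasure_mono[OF sub PiEs] z by simp
    then show "emeasure (PiM {j} (\<lambda>_. lborel::real measure)) ((\<lambda>y. merge ?I {j} (x, y)) -` ?A \<inter> space (PiM {j} (\<lambda>_. lborel::real measure))) = 0"
      by simp
  qed
  finally show ?thesis using Ameas IJ by (simp add: null_sets_def)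
qed
lemma vm_cont: "continuous_on UNIV (\<lambda>M::real^'t^'s. x v* M)"
  using vm_linear linear_continuous_on linear_conv_bounded_linear by blast

theorem proposition3:
  fixes S :: "real^'s^'n" and T :: "real^'t^'n"
    and X :: "(real^'s) set"
    and M1 :: "real^'t^'s" and r :: real
    and P :: "(real^'t^'s) measure"
  assumes "finite X"
    and "M1 \<in> C_LP S T"
    and "0 < r"
    and "ball M1 r \<inter> affine hull (C_LP S T) \<subseteq> C_LP S T"
    and "prob_space P"
    and "sets P = sets borel"
    and "absolutely_continuous (lebesgue_on_affine (C_LP S T)) P"
    and "AE M2 in P. M2 \<in> ball M1 r \<inter> affine hull (C_LP S T)"
  shows "AE M2 in P. \<forall>x\<in>X. x v* M1 = x v* M2 \<longrightarrow> x \<in> F_LP S T"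
proof -
  let ?C = "C_LP S T"
  define a where "a = (SOME a. a \<in> ?C)"
  define bs where "bs = (SOME bs. orthonormal_list bs \<and> span (set bs) = span ((\<lambda>x. x - a) ` ?C))"
  define f where "f = (\<lambda>z. a + (\<Sum>i<length bs. z i *\<^sub>R bs ! i))"
  have aC: "a \<in> ?C" using assms(2) unfolding a_def by (rule someI)
  have ex: "\<exists>bs. orthonormal_list bs \<and> span (set bs) = span ((\<lambda>x. x - a) ` ?C)"
  proof -
    obtain B where B: "B \<subseteq> span ((\<lambda>x. x - a) ` ?C)" "pairwise orthogonal B"
      "\<And>x. x \<in> B \<Longrightarrow> norm x = 1" "independent B" "span B = span ((\<lambda>x. x - a) ` ?C)"
      using orthonormal_basis_subspace[OF subspace_span] by metis
    have "finite B" using B(4) independent_imp_finite by blast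
    then obtain l where l: "set l = B" "distinct l" using finite_distinct_list by blast
    have "orthonormal_list l"
      unfolding orthonormal_list_def
    proof (intro allI impI)
      fix i j assume ij: "i < length l" "j < length l"
      show "inner (l ! i) (l ! j) = (if i = j then 1 else 0)"
      proof (cases "i = j")
        case True
        have "norm (l ! i) = 1" using B(3) l(1) ij by auto
        then show ?thesis using True by (simp add: norm_eq_1)
      next
        case False
        then have "l ! i \<noteq> l ! j" using l(2) ij by (simp add: nth_eq_iff_index_eq)
        moreover have "l ! i \<in> B" "l ! j \<in> B" using l(1) ij by auto
        ultimately show ?thesis using B(2) False by (auto simp: pairwise_def orthogonal_def)
      qed
    qed
    then show ?thesis using l(1) B(5) by blast
  qed
  have bs: "orthonormal_list bs \<and> span (set bs) = span ((\<lambda>x. x - a) ` ?C)"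
    unfolding bs_def by (rule someI_ex[OF ex])
  have L: "lebesgue_on_affine ?C = distr (PiM {..<length bs} (\<lambda>_. lborel::real measure)) borel f"
    unfolding lebesgue_on_affine_def Let_def a_def[symmetric] bs_def[symmetric] f_def ..
  have fmeas: "f \<in> borel_measurable (PiM {..<length bs} (\<lambda>_. lborel::real measure))"
    unfolding f_def
  proof (intro borel_measurable_add measurable_const borel_measurable_sum borel_measurable_scaleR)
    fix i assume "i \<in> {..<length bs}"
    then show "(\<lambda>z. z i) \<in> borel_measurable (PiM {..<length bs} (\<lambda>_. lborel::real measure))"
      using measurable_component_singleton[of i "{..<length bs}" "\<lambda>_. lborel::real measure"] by simp
  qed simp_all
  have null: "{M. x v* M = x v* M1} \<in> null_sets P" if xF: "x \<notin> F_LP S T" for x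
  proof -
    have "\<exists>j<length bs. x v* (bs!j) \<noteq> 0"
    proof (rule ccontr)
      assume "\<not> ?thesis"
      then have z: "\<forall>b\<in>set bs. x v* b = 0" by (auto simp: in_set_conv_nth)
      have eq: "x v* M = x v* a" if M: "M \<in> ?C" for M
      proof -
        have "M - a \<in> span (set bs)" using bs M by (auto intro: span_base)
        then have "x v* (M - a) = 0"
          using linear_eq_0_on_span[OF vm_linear] z by blast
        then show ?thesis using linear_diff[OF vm_linear, of x M a] by simp
      qed
      have s1: "{x v* M | M. M \<in> ?C} \<subseteq> {x v* a}" using eq by blast
      have s2: "x v* a \<in> {x v* M | M. M \<in> ?C}" using aC by blast
      have "{x v* M | M. M \<in> ?C} = {x v* a}" using s1 s2 by blast
      then have "x \<in> F_LP S T" unfolding F_LP_def by simp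
      then show False using xF by simp
    qed
    then obtain j where j: "j < length bs" "x v* (bs!j) \<noteq> 0" by blast
    have "\<exists>t. (x v* (bs!j)) $ t \<noteq> 0" using j(2) by (auto simp: vec_eq_iff)
    then obtain t where t: "(x v* (bs!j)) $ t \<noteq> 0" by blast
    define \<beta> where "\<beta> i = (x v* (bs!i)) $ t" for i
    define \<gamma> where "\<gamma> = (x v* M1 - x v* a) $ t"
    have Bmeas: "{M. x v* M = x v* M1} \<in> sets borel"
      by (rule borel_closed, rule closed_Collect_eq) (auto intro: vm_cont)
    let ?H = "{z \<in> space (PiM {..<length bs} (\<lambda>_. lborel::real measure)). (\<Sum>i<length bs. z i * \<beta> i) = \<gamma>}"
    have H: "?H \<in> null_sets (PiM {..<length bs} (\<lambda>_. lborel::real measure))"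
      using null_hyper[of j "length bs" \<beta> \<gamma>] j t by (simp add: \<beta>_def)
    have sub: "f -` {M. x v* M = x v* M1} \<inter> space (PiM {..<length bs} (\<lambda>_. lborel::real measure)) \<subseteq> ?H"
    proof
      fix z assume z: "z \<in> f -` {M. x v* M = x v* M1} \<inter> space (PiM {..<length bs} (\<lambda>_. lborel::real measure))"
      have "x v* f z = x v* a + (\<Sum>i<length bs. z i *\<^sub>R (x v* (bs ! i)))"
        unfolding f_def by (simp add: linear_add[OF vm_linear] linear_sum[OF vm_linear] linear_scale[OF vm_linear])
      then have E: "x v* a + (\<Sum>i<length bs. z i *\<^sub>R (x v* (bs ! i))) = x v* M1"
        using z by simp
      have "(x v* a + (\<Sum>i<length bs. z i *\<^sub>R (x v* (bs ! i)))) $ t = (x v* M1) $ t"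
        using E by simp
      then have "(x v* a) $ t + (\<Sum>i<length bs. z i * \<beta> i) = (x v* M1) $ t"
        by (simp add: \<beta>_def sum_component)
      then show "z \<in> ?H" using z by (simp add: \<gamma>_def)
    qed
    have "emeasure (lebesgue_on_affine ?C) {M. x v* M = x v* M1} = 0"
    proof -
      have "emeasure (lebesgue_on_affine ?C) {M. x v* M = x v* M1}
          = emeasure (PiM {..<length bs} (\<lambda>_. lborel::real measure)) (f -` {M. x v* M = x v* M1} \<inter> space (PiM {..<length bs} (\<lambda>_. lborel::real measure)))"
        unfolding L by (rule emeasure_distr[OF fmeas Bmeas])
      also have "\<dots> \<le> emeasure (PiM {..<length bs} (\<lambda>_. lborel::real measure)) ?H"
        using emeasure_mono[OF sub] H by auto
      also have "\<dots> = 0" using H by auto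
      finally show ?thesis by simp
    qed
    then have "{M. x v* M = x v* M1} \<in> null_sets (lebesgue_on_affine ?C)"
      using Bmeas L by (simp add: null_sets_def)
    then show ?thesis using assms(7) unfolding absolutely_continuous_def by blast
  qed
  have "AE M2 in P. \<forall>x\<in>X - F_LP S T. M2 \<notin> {M. x v* M = x v* M1}"
  proof (rule AE_finite_allI)
    show "finite (X - F_LP S T)" using assms(1) by simp
    fix x assume "x \<in> X - F_LP S T"
    then have "{M. x v* M = x v* M1} \<in> null_sets P" using null by blast
    then show "AE M2 in P. M2 \<notin> {M. x v* M = x v* M1}" by (rule AE_not_in)
  qed
  then show ?thesis
  proof (rule eventually_mono)
    fix M2 assume H: "\<forall>x\<in>X - F_LP S T. M2 \<notin> {M. x v* M = x v* M1}"
    show "\<forall>x\<in>X. x v* M1 = x v* M2 \<longrightarrow> x \<in> F_LP S T"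
    proof (intro ballI impI)
      fix x assume x: "x \<in> X" "x v* M1 = x v* M2"
      show "x \<in> F_LP S T"
      proof (rule ccontr)
        assume "x \<notin> F_LP S T"
        then have "x \<in> X - F_LP S T" using x(1) by (rule_tac DiffI)
        with H have "M2 \<notin> {M. x v* M = x v* M1}" by (rule bspec)
        then show False using x(2) by simp
      qed
    qed
  qed
qed

end
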